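(* Let $P$ be an affine property of finite sets of integers. For each positive integer $n$, let $S(n;P) \subseteq \{1,2,\dots,n\}$ be a subset of largest possible cardinality among the subsets of $\{1,\dots,n\}$ having property $P$, let $f(n;P) = |S(n;P)|$, and let $C_P(n) = f(n;P)/n$. Then $$\sum_{a \in S(n;P)} z^a = C_P(n) \sum_{k=1}^{n} z^k + o(n)$$ as $n \to \infty$, uniformly on $|z| = 1$; that is, $\sup_{|z|=1} \left| \sum_{a \in S(n;P)} z^a - C_P(n) \sum_{k=1}^{n} z^k \right| = o(n)$.
   Context: A property $P$ of finite sets of integers is called affine if (C1) for each fixed pair of integers $\alpha \neq 0$ and $\beta$, a set $\{a_n\}$ has $P$ if and only if $\{\alpha a_n + \beta\}$ has $P$; and (C2) if a set has $P$, then all of its subsets have $P$. Examples: the trivial property of just being a set, or the property of not containing any arithmetic progression of three distinct terms. *)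

theory Defs
  imports "HOL-Analysis.Analysis" "HOL-Library.Landau_Symbols"
begin

definition affine_property :: "(int set \<Rightarrow> bool) \<Rightarrow> bool" where
  "affine_property P \<longleftrightarrow>
     (\<forall>A \<alpha> \<beta>. finite A \<longrightarrow> \<alpha> \<noteq> 0 \<longrightarrow> (P A \<longleftrightarrow> P ((\<lambda>a. \<alpha> * a + \<beta>) ` A))) \<and>
     (\<forall>A B. finite A \<longrightarrow> P A \<longrightarrow> B \<subseteq> A \<longrightarrow> P B)"

definition is_max_P_set :: "(int set \<Rightarrow> bool) \<Rightarrow> nat \<Rightarrow> int set \<Rightarrow> bool" where
  "is_max_P_set P n S \<longleftrightarrow> S \<subseteq> {1..int n} \<and> P S \<and>
     (\<forall>T. T \<subseteq> {1..int n} \<longrightarrow> P T \<longrightarrow> card T \<le> card S)"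

end

theory Submission
  imports Defs "HOL-Analysis.Kronecker_Approximation_Theorem"
begin

lemma chord: "norm (cis x - 1) \<le> \<bar>x\<bar>"
proof -
  have "(norm (cis x - 1))^2 = (cos x - 1)^2 + (sin x)^2"
    by (simp add: cmod_def cis.code)
  also have "\<dots> = 2 - 2 * cos x" by (simp add: power2_eq_square algebra_simps)
  also have "\<dots> = 4 * (sin (x/2))^2"
    using cos_double_sin[of "x/2"] by simp
  also have "\<dots> \<le> 4 * (x/2)^2"
  proof -
    have "\<bar>sin (x/2)\<bar>^2 \<le> \<bar>x/2\<bar>^2"
      by (rule power_mono) (use abs_sin_x_le_abs_x[of "x/2"] in auto)
    hence "(sin (x/2))^2 \<le> (x/2)^2" by (simp add: power_divide)
    then show ?thesis by simp
  qed
  also have "\<dots> = \<bar>x\<bar>^2" by (simp add: power2_eq_square)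
  finally show ?thesis by (rule power2_le_imp_le) simp
qed

lemma circle_dirichlet:
  fixes z :: complex
  assumes "norm z = 1" "M > 0"
  obtains q :: nat where "0 < q" "q \<le> M" "norm (z^q - 1) \<le> 2*pi/M"
proof -
  define \<theta> where "\<theta> = Arg z / (2*pi)"
  obtain h k where hk: "0 < k" "k \<le> int M" "\<bar>of_int k * \<theta> - of_int h\<bar> < 1/M"
    using Dirichlet_approx[OF assms(2)] by blast
  have "z \<noteq> 0" using assms by auto
  have z: "z = cis (Arg z)" using assms cis_Arg[OF \<open>z \<noteq> 0\<close>]
    by (simp add: sgn_div_norm)
  have "z ^ nat k = cis (real (nat k) * Arg z)" by (subst z) (simp add: Complex.DeMoivre)
  also have "real (nat k) * Arg z = 2*pi*(of_int k * \<theta> - of_int h) + 2*pi* of_int h"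
    using hk by (simp add: \<theta>_def algebra_simps)
  also have "cis \<dots> = cis (2*pi*(of_int k * \<theta> - of_int h))"
  proof -
    have "cis (2*pi * of_int h) = 1" by (rule cis_multiple_2pi) simp
    thus ?thesis by (simp add: cis_mult[symmetric])
  qed
  finally have eq: "z ^ nat k = cis (2*pi*(of_int k * \<theta> - of_int h))" .
  have "norm (z ^ nat k - 1) \<le> \<bar>2*pi*(of_int k * \<theta> - of_int h)\<bar>"
    unfolding eq by (rule chord)
  also have "\<dots> = 2*pi*\<bar>of_int k * \<theta> - of_int h\<bar>" by (simp add: abs_mult)
  also have "\<dots> \<le> 2*pi*(1/M)" by (rule mult_left_mono) (use hk(3) in linarith, simp)
  finally have 3: "norm (z ^ nat k - 1) \<le> 2*pi/M" by simp
  have 1: "0 < nat k" using hk(1) by simp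
  have 2: "nat k \<le> M" using hk(2) by linarith
  show ?thesis by (rule that[OF 1 2 3])
qed

lemma pow_chord:
  fixes u :: complex
  assumes "norm u = 1"
  shows "norm (1 - u^t) \<le> t * norm (1 - u)"
proof (induction t)
  case 0 then show ?case by simp
next
  case (Suc t)
  have "1 - u^Suc t = (1 - u^t) + u^t * (1 - u)" by (simp add: algebra_simps)
  hence "norm (1 - u^Suc t) \<le> norm (1 - u^t) + norm (u^t * (1-u))"
    by (metis norm_triangle_ineq)
  also have "norm (u^t * (1-u)) = norm (1 - u)" by (simp add: norm_mult norm_power assms)
  finally show ?case using Suc by (simp add: algebra_simps)
qed

lemma shift_sum:
  fixes g :: "nat \<Rightarrow> 'a::comm_monoid_add"
  assumes g0: "\<forall>a>n. g a = 0" and R: "d + n < R"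
  shows "(\<Sum>b<R. if d \<le> b then g (b - d) else 0) = (\<Sum>a\<le>n. g a)"
proof -
  have split: "{..<R} = {..<d} \<union> {d..<R}" using R by auto
  have "(\<Sum>b<R. if d \<le> b then g (b - d) else 0)
      = (\<Sum>b\<in>{..<d}. if d \<le> b then g (b - d) else 0) + (\<Sum>b\<in>{d..<R}. if d \<le> b then g (b - d) else 0)"
    unfolding split by (rule sum.union_disjoint) auto
  also have "(\<Sum>b\<in>{..<d}. if d \<le> b then g (b - d) else 0) = 0" by (rule sum.neutral) auto
  also have "(\<Sum>b\<in>{d..<R}. if d \<le> b then g (b - d) else 0) = (\<Sum>b\<in>{d..<R}. g (b - d))"
    by (rule sum.cong) auto
  also have "\<dots> = (\<Sum>a\<in>{0..<R-d}. g a)"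
    using sum.shift_bounds_nat_ivl[of "\<lambda>b. g (b - d)" 0 d "R - d"] R by simp
  also have "\<dots> = (\<Sum>a\<le>n. g a)"
    by (rule sum.mono_neutral_right) (use R g0 in auto)
  finally show ?thesis by simp
qed


lemma term_bound:
  fixes z :: complex
  assumes z: "norm z = 1" and d: "norm (z^q - 1) \<le> \<delta>" and tq: "t*q \<le> b"
  shows "norm (z^(b - t*q) - z^b) \<le> t * \<delta>"
proof -
  have "z^b = z^(b - t*q) * (z^q)^t" using tq by (simp add: power_add[symmetric] power_mult[symmetric] mult.commute)
  hence "z^(b - t*q) - z^b = z^(b - t*q) * (1 - (z^q)^t)" by (simp add: algebra_simps)
  hence "norm (z^(b - t*q) - z^b) = norm (1 - (z^q)^t)" by (simp add: norm_mult norm_power z)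
  also have "\<dots> \<le> t * norm (1 - z^q)" by (rule pow_chord) (simp add: norm_power z)
  also have "\<dots> \<le> t * \<delta>" using d by (simp add: norm_minus_commute mult_left_mono)
  finally show ?thesis .
qed


lemma core:
  fixes z :: complex and w :: "nat \<Rightarrow> real" and n m q :: nat and \<epsilon> \<delta> :: real
  assumes z: "norm z = 1" and q: "q > 0" and m: "m > 0"
    and d: "norm (z^q - 1) \<le> \<delta>"
    and w0: "\<forall>a>n. w a = 0" and w1: "\<forall>a. \<bar>w a\<bar> \<le> 1" and wsum: "(\<Sum>a\<le>n. w a) = 0"
    and full: "\<forall>b. (m-1)*q < b \<and> b \<le> n \<longrightarrow> (\<Sum>t<m. w (b - t*q)) \<le> \<epsilon>*m"
    and eps: "\<epsilon> \<ge> 0"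
  shows "norm (\<Sum>a\<le>n. of_real (w a) * z^a) \<le> 2*(n+m*q)*\<epsilon> + 4*m*q + (n+m*q)*m*\<delta>"
proof -
  define R where "R = n + m*q"
  define T where "T = (\<Sum>a\<le>n. of_real (w a) * z^a)"
  define V where "V b = (\<Sum>t<m. if t*q \<le> b then of_real (w (b-t*q)) * z^(b-t*q) else 0)" for b
  define W where "W b = (\<Sum>t<m. if t*q \<le> b then w (b-t*q) else 0)" for b
  have dpos: "\<delta> \<ge> 0" using d norm_ge_zero order_trans by blast
  have tqR: "t*q + n < R" if "t < m" for t
  proof -
    have "t*q < m*q" using that q by simp
    thus ?thesis unfolding R_def by simp
  qed
  have 1: "of_nat m * T = (\<Sum>b<R. V b)"
  proof -
    have "of_nat m * T = (\<Sum>t<m. T)" by simp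
    also have "\<dots> = (\<Sum>t<m. \<Sum>b<R. if t*q \<le> b then of_real (w (b-t*q)) * z^(b-t*q) else 0)"
    proof (rule sum.cong[OF refl])
      fix t assume "t \<in> {..<m}"
      show "T = (\<Sum>b<R. if t*q \<le> b then of_real (w (b-t*q)) * z^(b-t*q) else 0)"
        unfolding T_def
        by (rule shift_sum[symmetric]) (use w0 tqR \<open>t \<in> {..<m}\<close> in auto)
    qed
    also have "\<dots> = (\<Sum>b<R. V b)" unfolding V_def by (rule sum.swap)
    finally show ?thesis .
  qed
  have 2: "(\<Sum>b<R. W b) = 0"
  proof -
    have "(\<Sum>b<R. W b) = (\<Sum>t<m. \<Sum>b<R. if t*q \<le> b then w (b-t*q) else 0)"
      unfolding W_def by (rule sum.swap)
    also have "\<dots> = (\<Sum>t<m. (\<Sum>a\<le>n. w a))"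
    proof (rule sum.cong[OF refl])
      fix t assume "t \<in> {..<m}"
      show "(\<Sum>b<R. if t*q \<le> b then w (b-t*q) else 0) = (\<Sum>a\<le>n. w a)"
        by (rule shift_sum) (use w0 tqR \<open>t \<in> {..<m}\<close> in auto)
    qed
    finally show ?thesis using wsum by simp
  qed
  have 3: "norm (V b - of_real (W b) * z^b) \<le> real m * (real m * \<delta>)" for b
  proof -
    have eqV: "V b - of_real (W b) * z^b = (\<Sum>t<m. if t*q \<le> b then of_real (w (b-t*q)) * (z^(b-t*q) - z^b) else 0)"
    proof -
      have e1: "of_real (W b) * z^b = (\<Sum>t<m. if t*q \<le> b then of_real (w (b-t*q)) * z^b else 0)"
        unfolding W_def of_real_sum sum_distrib_right by (rule sum.cong) auto
      show ?thesis unfolding e1 V_def sum_subtractf[symmetric]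
        by (rule sum.cong) (auto simp: algebra_simps)
    qed
    have "norm (V b - of_real (W b) * z^b) \<le> (\<Sum>t<m. norm (if t*q \<le> b then of_real (w (b-t*q)) * (z^(b-t*q) - z^b) else 0))"
      unfolding eqV by (rule norm_sum)
    also have "\<dots> \<le> (\<Sum>t<m. real m * \<delta>)"
    proof (rule sum_mono)
      fix t assume t: "t \<in> {..<m}"
      show "norm (if t*q \<le> b then of_real (w (b-t*q)) * (z^(b-t*q) - z^b) else 0) \<le> real m * \<delta>"
      proof (cases "t*q \<le> b")
        case True
        have "norm (of_real (w (b-t*q)) * (z^(b-t*q) - z^b)) = \<bar>w (b-t*q)\<bar> * norm (z^(b-t*q) - z^b)"
          by (simp add: norm_mult)
        also have "\<dots> \<le> 1 * (real t * \<delta>)"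
          by (rule mult_mono) (use w1 term_bound[OF z d True] in auto)
        also have "\<dots> \<le> real m * \<delta>" using t dpos by (simp add: mult_right_mono)
        finally show ?thesis using True by simp
      qed (use dpos in simp)
    qed
    also have "\<dots> = real m * (real m * \<delta>)" by simp
    finally show ?thesis .
  qed
  have 4: "(\<Sum>b<R. \<bar>W b\<bar>) \<le> 2*R*\<epsilon>*m + 4*m*m*q"
  proof -
    define B where "B = {b\<in>{..<R}. b \<le> (m-1)*q \<or> n < b}"
    have Bsub: "B \<subseteq> {..(m-1)*q} \<union> {n<..<R}" unfolding B_def by auto
    have "card B \<le> card ({..(m-1)*q} \<union> {n<..<R})" by (rule card_mono[OF _ Bsub]) auto
    also have "\<dots> \<le> card {..(m-1)*q} + card {n<..<R}" by (rule card_Un_le)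
    also have "\<dots> \<le> 2*m*q"
    proof -
      have "(m-1)*q + 1 + (R - Suc n) \<le> 2*m*q" using m q unfolding R_def
        by (cases m) (auto simp: algebra_simps)
      thus ?thesis by simp
    qed
    finally have cardB: "card B \<le> 2*m*q" .
    have mx: "max (W b) 0 \<le> \<epsilon>*m + (if b \<in> B then real m else 0)" if b: "b \<in> {..<R}" for b
    proof (cases "b \<in> B")
      case True
      have "W b \<le> (\<Sum>t<m. 1)" unfolding W_def
        by (rule sum_mono) (use w1 in \<open>auto simp: abs_le_iff\<close>)
      moreover have "0 \<le> \<epsilon>*m" using eps by simp
      ultimately show ?thesis using True by (simp add: max_def)
    next
      case False
      hence fb: "(m-1)*q < b" "b \<le> n" using b unfolding B_def by auto
      have "W b = (\<Sum>t<m. w (b-t*q))" unfolding W_def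
      proof (rule sum.cong[OF refl])
        fix t assume "t \<in> {..<m}"
        hence "t \<le> m-1" by simp
        hence "t*q \<le> (m-1)*q" by (rule mult_le_mono1)
        hence "t*q \<le> b" using fb by linarith
        thus "(if t*q \<le> b then w (b-t*q) else 0) = w (b-t*q)" by simp
      qed
      also have "\<dots> \<le> \<epsilon>*m" using full fb by blast
      finally show ?thesis using False eps by simp
    qed
    have "(\<Sum>b<R. \<bar>W b\<bar>) = (\<Sum>b<R. 2 * max (W b) 0 - W b)"
      by (rule sum.cong) auto
    also have "\<dots> = 2 * (\<Sum>b<R. max (W b) 0)" using 2 by (simp add: sum_subtractf sum_distrib_left)
    also have "(\<Sum>b<R. max (W b) 0) \<le> (\<Sum>b<R. \<epsilon>*m + (if b \<in> B then real m else 0))"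
      by (rule sum_mono) (use mx in auto)
    also have "\<dots> = R*(\<epsilon>*m) + real m * card B"
    proof -
      have "{..<R} \<inter> B = B" unfolding B_def by auto
      thus ?thesis by (simp add: sum.distrib sum.If_cases)
    qed
    also have "\<dots> \<le> R*(\<epsilon>*m) + real m * (2*m*q)"
      using cardB by (intro add_left_mono mult_left_mono) (auto simp del: of_nat_mult)
    finally show ?thesis by (simp add: algebra_simps)
  qed
  have "of_nat m * norm T = norm (\<Sum>b<R. V b)" using 1 by (metis norm_mult norm_of_nat)
  also have "(\<Sum>b<R. V b) = (\<Sum>b<R. of_real (W b) * z^b) + (\<Sum>b<R. V b - of_real (W b) * z^b)"
    by (simp add: sum_subtractf)
  also have "norm \<dots> \<le> norm (\<Sum>b<R. of_real (W b) * z^b) + norm (\<Sum>b<R. V b - of_real (W b) * z^b)"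
    by (rule norm_triangle_ineq)
  also have "norm (\<Sum>b<R. of_real (W b) * z^b) \<le> (\<Sum>b<R. \<bar>W b\<bar>)"
    by (rule order_trans[OF norm_sum]) (simp add: norm_mult norm_power z)
  also have "norm (\<Sum>b<R. V b - of_real (W b) * z^b) \<le> (\<Sum>b<R. real m * (real m * \<delta>))"
    by (rule order_trans[OF norm_sum]) (rule sum_mono, rule 3)
  finally have "m * norm T \<le> 2*R*\<epsilon>*m + 4*m*m*q + R * (m * (real m * \<delta>))"
    using 4 by simp
  hence "m * norm T \<le> m * (2*R*\<epsilon> + 4*m*q + R*m*\<delta>)" by (simp add: algebra_simps)
  hence "norm T \<le> 2*R*\<epsilon> + 4*m*q + R*m*\<delta>" using m by simp
  thus ?thesis unfolding T_def R_def by simp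
qed

lemma ap_bound:
  fixes P :: "int set \<Rightarrow> bool" and X Sm :: "int set" and \<alpha> \<beta> :: int
  assumes ap: "affine_property P" and mx: "is_max_P_set P m Sm"
    and X: "finite X" "P X" "X \<subseteq> (\<lambda>x. \<alpha>*x+\<beta>) ` {1..int m}" and a: "\<alpha> \<noteq> 0"
  shows "card X \<le> card Sm"
proof -
  define Y where "Y = {x\<in>{1..int m}. \<alpha>*x+\<beta> \<in> X}"
  have XY: "X = (\<lambda>x. \<alpha>*x+\<beta>) ` Y"
  proof
    show "X \<subseteq> (\<lambda>x. \<alpha>*x+\<beta>) ` Y"
    proof
      fix x assume x: "x \<in> X"
      then obtain y where y: "y \<in> {1..int m}" "x = \<alpha>*y+\<beta>" using X(3) by blast
      hence "y \<in> Y" using x unfolding Y_def by simp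
      thus "x \<in> (\<lambda>x. \<alpha>*x+\<beta>) ` Y" using y by blast
    qed
  qed (auto simp: Y_def)
  have fY: "finite Y" unfolding Y_def by (rule finite_subset[of _ "{1..int m}"]) auto
  have "P Y" using ap fY a X(2) XY unfolding affine_property_def by blast
  moreover have "Y \<subseteq> {1..int m}" unfolding Y_def by auto
  ultimately have "card Y \<le> card Sm" using mx unfolding is_max_P_set_def by blast
  moreover have "card X \<le> card Y" unfolding XY by (rule card_image_le[OF fY])
  ultimately show ?thesis by simp
qed

lemma card_nat_part:
  fixes S :: "int set"
  assumes "S \<subseteq> {1..int n}"
  shows "S = int ` {a\<in>{1..n}. int a \<in> S}" "card {a\<in>{1..n}. int a \<in> S} = card S"
proof -
  show e: "S = int ` {a\<in>{1..n}. int a \<in> S}"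
  proof
    show "S \<subseteq> int ` {a\<in>{1..n}. int a \<in> S}"
    proof
      fix x assume x: "x \<in> S"
      hence "1 \<le> x" "x \<le> int n" using assms by auto
      hence "nat x \<in> {a\<in>{1..n}. int a \<in> S}" "x = int (nat x)" using x by auto
      thus "x \<in> int ` {a\<in>{1..n}. int a \<in> S}" by blast
    qed
  qed auto
  show "card {a\<in>{1..n}. int a \<in> S} = card S"
    by (subst (2) e) (simp add: card_image)
qed


lemma block_bound:
  fixes P :: "int set \<Rightarrow> bool"
  assumes ap: "affine_property P" and mn: "is_max_P_set P n Sn" and mm: "is_max_P_set P m Sm"
    and q: "q > 0" and b: "(m-1)*q < b"
  shows "card {t\<in>{..<m}. int (b - t*q) \<in> Sn} \<le> card Sm"
proof -
  define g where "g t = int (b - t*q)" for t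
  define A where "A = {t\<in>{..<m}. g t \<in> Sn}"
  have gt: "g t = int b - int t * int q" if "t < m" for t
  proof -
    have "t \<le> m - 1" using that by simp
    hence "t*q \<le> (m-1)*q" by (rule mult_le_mono1)
    hence "t*q \<le> b" using b by linarith
    thus ?thesis unfolding g_def by (simp add: of_nat_diff)
  qed
  have inj: "inj_on g A"
  proof
    fix x y assume "x \<in> A" "y \<in> A" "g x = g y"
    hence "int x * int q = int y * int q" using gt unfolding A_def by auto
    thus "x = y" using q by simp
  qed
  have fin: "finite Sn" using mn unfolding is_max_P_set_def by (meson finite_atLeastAtMost_int finite_subset)
  have PSn: "P Sn" using mn unfolding is_max_P_set_def by blast
  have sub: "g ` A \<subseteq> Sn" unfolding A_def by auto
  have fX: "finite (g ` A)" using fin sub finite_subset by blast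
  have PX: "P (g ` A)" using ap fin PSn sub unfolding affine_property_def by blast
  have "g ` A \<subseteq> (\<lambda>x. (- int q)*x + (int b + int q)) ` {1..int m}"
  proof
    fix y assume "y \<in> g ` A"
    then obtain t where t: "t \<in> A" "y = g t" by blast
    hence "t < m" unfolding A_def by simp
    hence "y = (- int q) * (int t + 1) + (int b + int q)" "int t + 1 \<in> {1..int m}"
      using t gt by (auto simp: algebra_simps)
    thus "y \<in> (\<lambda>x. (- int q)*x + (int b + int q)) ` {1..int m}" by blast
  qed
  hence "card (g ` A) \<le> card Sm"
    by (rule ap_bound[OF ap mm fX PX]) (use q in simp)
  moreover have "card (g ` A) = card A" by (rule card_image[OF inj])
  ultimately show ?thesis unfolding A_def g_def by simp
qed


theorem mainTheorem2:
  fixes P :: "int set \<Rightarrow> bool" and S :: "nat \<Rightarrow> int set"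
  assumes "affine_property P"
    and "\<And>n. n > 0 \<Longrightarrow> is_max_P_set P n (S n)"
  shows "(\<lambda>n. SUP z\<in>{z::complex. norm z = 1}.
            norm ((\<Sum>a\<in>S n. z ^ nat a)
                  - complex_of_real (real (card (S n)) / real n) * (\<Sum>k=1..n. z ^ k)))
         \<in> o(\<lambda>n. real n)"
proof -
  note ap = assms(1) and mx = assms(2)
  define F where "F m = real (card (S m)) / real m" for m
  define L where "L = (INF m\<in>{0::nat<..}. F m)"
  have bdd: "bdd_below (F ` {0<..})" by (rule bdd_belowI2[of _ 0]) (simp add: F_def)
  have LF: "L \<le> F n" if "n > 0" for n
    unfolding L_def by (rule cINF_lower[OF bdd]) (use that in simp)
  show ?thesis
  proof (rule landau_o.smallI)
    fix c :: real assume c: "c > 0"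
    define \<epsilon> where "\<epsilon> = c / 7"
    have eps: "\<epsilon> > 0" using c by (simp add: \<epsilon>_def)
    have "(INF m\<in>{0::nat<..}. F m) < L + \<epsilon>" using eps by (simp add: L_def)
    then obtain m :: nat where m: "m > 0" "F m < L + \<epsilon>"
      using cINF_less_iff[OF _ bdd] by auto
    define M :: nat where "M = nat \<lceil>4*pi*m/\<epsilon>\<rceil> + 1"
    have M0: "M > 0" unfolding M_def by simp
    have M1: "4*pi*m/\<epsilon> \<le> M" unfolding M_def by linarith
    have M2: "2*pi*m/M \<le> \<epsilon>/2"
    proof -
      have "4*pi*m \<le> \<epsilon> * M" using M1 eps by (simp add: divide_le_eq mult.commute)
      thus ?thesis using M0 by (simp add: divide_le_eq)
    qed
    define N0 where "N0 = nat \<lceil>4*m*M/\<epsilon>\<rceil> + m*M + 1"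
    show "eventually (\<lambda>n. norm (SUP z\<in>{z::complex. norm z = 1}.
            norm ((\<Sum>a\<in>S n. z ^ nat a)
                  - complex_of_real (real (card (S n)) / real n) * (\<Sum>k=1..n. z ^ k))) \<le> c * norm (real n)) at_top"
    proof (rule eventually_at_top_linorderI[of N0])
      fix n assume n: "n \<ge> N0"
      have n0: "n > 0" using n unfolding N0_def by simp
      have nmM: "m*M \<le> n" using n unfolding N0_def by simp
      have n4: "4*m*M \<le> \<epsilon>*n"
      proof -
        have "4*m*M/\<epsilon> \<le> n" using n unfolding N0_def by linarith
        thus ?thesis using eps by (simp add: divide_le_eq mult.commute)
      qed
      have mxn: "is_max_P_set P n (S n)" using mx n0 by blast
      have Ssub: "S n \<subseteq> {1..int n}" using mxn unfolding is_max_P_set_def by blast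
      have cardle: "card (S n) \<le> n"
      proof -
        have "card (S n) \<le> card {1..int n}" by (rule card_mono[OF _ Ssub]) simp
        thus ?thesis by simp
      qed
      define C where "C = F n"
      have C0: "0 \<le> C" "C \<le> 1" using cardle n0 unfolding C_def F_def by (auto simp: divide_le_eq)
      have nC: "real n * C = card (S n)" using n0 unfolding C_def F_def by simp
      have LC: "L \<le> C" unfolding C_def by (rule LF[OF n0])
      define A where "A = {a\<in>{1..n}. int a \<in> S n}"
      have SA: "S n = int ` A" and cA: "card A = card (S n)"
        using card_nat_part[OF Ssub] unfolding A_def by auto
      define w where "w a = (if 1 \<le> a \<and> a \<le> n then (if int a \<in> S n then 1 else 0) - C else 0)" for a
      have w0: "\<forall>a>n. w a = 0" unfolding w_def by simp
      have w1: "\<forall>a. \<bar>w a\<bar> \<le> 1" unfolding w_def using C0 by auto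
      have wsplit: "(\<Sum>a\<le>n. g a * w a) = (\<Sum>a\<in>{1..n}. g a * ((if int a \<in> S n then 1 else 0) - C))"
        for g :: "nat \<Rightarrow> real"
      proof -
        have "(\<Sum>a\<le>n. g a * w a) = (\<Sum>a\<in>{1..n}. g a * w a)"
          by (rule sum.mono_neutral_right) (auto simp: w_def)
        also have "\<dots> = (\<Sum>a\<in>{1..n}. g a * ((if int a \<in> S n then 1 else 0) - C))"
          by (rule sum.cong) (auto simp: w_def)
        finally show ?thesis .
      qed
      have wsum: "(\<Sum>a\<le>n. w a) = 0"
      proof -
        have "(\<Sum>a\<le>n. w a) = (\<Sum>a\<in>{1..n}. ((if int a \<in> S n then 1 else 0) - C))"
          using wsplit[of "\<lambda>_. 1"] by simp
        also have "\<dots> = (\<Sum>a\<in>{1..n}. (if int a \<in> S n then 1 else 0)) - n * C"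
          by (simp add: sum_subtractf)
        also have "(\<Sum>a\<in>{1..n}. (if int a \<in> S n then 1 else (0::real))) = card A"
          unfolding A_def by (simp add: sum.inter_filter[symmetric])
        finally show ?thesis using cA nC by simp
      qed
      have full: "\<forall>b. (m-1)*q < b \<and> b \<le> n \<longrightarrow> (\<Sum>t<m. w (b - t*q)) \<le> \<epsilon>*m" if q: "q > 0" for q
      proof (intro allI impI)
        fix b assume b: "(m-1)*q < b \<and> b \<le> n"
        have "(\<Sum>t<m. w (b - t*q)) = (\<Sum>t<m. (if int (b - t*q) \<in> S n then 1 else 0) - C)"
        proof (rule sum.cong[OF refl])
          fix t assume "t \<in> {..<m}"
          hence "t \<le> m-1" by simp
          hence "t*q \<le> (m-1)*q" by (rule mult_le_mono1)
          hence "t*q < b" using b by linarith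
          hence "1 \<le> b - t*q" "b - t*q \<le> n" using b by auto
          thus "w (b - t*q) = (if int (b - t*q) \<in> S n then 1 else 0) - C" unfolding w_def by simp
        qed
        also have "\<dots> = card {t\<in>{..<m}. int (b - t*q) \<in> S n} - m*C"
          by (simp add: sum_subtractf sum.inter_filter[symmetric])
        also have "card {t\<in>{..<m}. int (b - t*q) \<in> S n} \<le> card (S m)"
          by (rule block_bound[OF ap mxn mx[OF m(1)] q]) (use b in simp)
        hence "real (card {t\<in>{..<m}. int (b - t*q) \<in> S n}) \<le> m * F m"
          using m(1) unfolding F_def by simp
        also have "m * F m \<le> m * (C + \<epsilon>)" using m LC by (intro mult_left_mono) auto
        finally show "(\<Sum>t<m. w (b - t*q)) \<le> \<epsilon>*m" by (simp add: algebra_simps)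
      qed
      have bound: "norm ((\<Sum>a\<in>S n. z ^ nat a)
                  - complex_of_real (real (card (S n)) / real n) * (\<Sum>k=1..n. z ^ k)) \<le> c * n"
        if z: "norm z = 1" for z :: complex
      proof -
        obtain q where q: "0 < q" "q \<le> M" "norm (z^q - 1) \<le> 2*pi/M"
          using circle_dirichlet[OF z M0] by blast
        have eq: "(\<Sum>a\<in>S n. z ^ nat a) - complex_of_real (real (card (S n)) / real n) * (\<Sum>k=1..n. z ^ k)
              = (\<Sum>a\<le>n. of_real (w a) * z^a)"
        proof -
          have "(\<Sum>a\<in>S n. z ^ nat a) = (\<Sum>a\<in>A. z ^ a)" unfolding SA
            by (subst sum.reindex) (auto simp: inj_on_def)
          also have "\<dots> = (\<Sum>a\<in>{1..n}. if int a \<in> S n then z^a else 0)"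
            unfolding A_def by (rule sum.inter_filter) simp
          finally have e1: "(\<Sum>a\<in>S n. z ^ nat a) = (\<Sum>a\<in>{1..n}. if int a \<in> S n then z^a else 0)" .
          have "(\<Sum>a\<le>n. of_real (w a) * z^a) = (\<Sum>a\<in>{1..n}. of_real (w a) * z^a)"
            by (rule sum.mono_neutral_right) (auto simp: w_def)
          also have "\<dots> = (\<Sum>a\<in>{1..n}. (if int a \<in> S n then z^a else 0) - of_real C * z^a)"
            by (rule sum.cong) (auto simp: w_def algebra_simps)
          also have "\<dots> = (\<Sum>a\<in>S n. z ^ nat a) - of_real C * (\<Sum>k=1..n. z ^ k)"
            unfolding e1 by (simp add: sum_subtractf sum_distrib_left)
          finally show ?thesis unfolding C_def F_def by simp
        qed
        have "norm (\<Sum>a\<le>n. of_real (w a) * z^a) \<le> 2*(n+m*q)*\<epsilon> + 4*m*q + (n+m*q)*m*(2*pi/M)"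
          by (rule core[OF z q(1) m(1) q(3) w0 w1 wsum full[OF q(1)]]) (use eps in simp)
        also have "\<dots> \<le> 6*\<epsilon>*n"
        proof -
          have mq: "m*q \<le> m*M" using q(2) by simp
          hence r1: "real (n + m*q) \<le> 2*n" using nmM by linarith
          have r2: "real (4*m*q) \<le> \<epsilon>*n"
          proof -
            have "4*m*q \<le> 4*m*M" using q(2) by simp
            hence "real (4*m*q) \<le> real (4*m*M)" by linarith
            thus ?thesis using n4 by simp
          qed
          have "2*(n+m*q)*\<epsilon> \<le> 2*(2*n)*\<epsilon>"
            using r1 eps by (intro mult_right_mono) auto
          moreover have "(n+m*q)*m*(2*pi/M) = real (n+m*q) * (2*pi*m/M)" by simp
          moreover have "real (n+m*q) * (2*pi*m/M) \<le> (2*n) * (\<epsilon>/2)"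
            using r1 M2 by (intro mult_mono) auto
          ultimately show ?thesis using r2 by (simp add: algebra_simps)
        qed
        also have "\<dots> \<le> c * n" unfolding \<epsilon>_def using c by simp
        finally show ?thesis unfolding eq .
      qed
      define E where "E z = norm ((\<Sum>a\<in>S n. z ^ nat a)
                  - complex_of_real (real (card (S n)) / real n) * (\<Sum>k=1..n. z ^ k))" for z :: complex
      have ne: "{z::complex. norm z = 1} \<noteq> {}" by (auto intro: exI[of _ 1])
      have sup_le: "(SUP z\<in>{z::complex. norm z = 1}. E z) \<le> c * n"
        by (rule cSUP_least[OF ne]) (use bound in \<open>auto simp: E_def\<close>)
      have bdda: "bdd_above (E ` {z::complex. norm z = 1})"
        by (rule bdd_aboveI2[where M="c*n"]) (use bound in \<open>auto simp: E_def\<close>)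
      have "E 1 \<le> (SUP z\<in>{z::complex. norm z = 1}. E z)"
        by (rule cSUP_upper[OF _ bdda]) simp
      moreover have "0 \<le> E 1" unfolding E_def by simp
      ultimately have "norm (SUP z\<in>{z::complex. norm z = 1}. E z) \<le> c * n"
        using sup_le by simp
      thus "norm (SUP z\<in>{z::complex. norm z = 1}.
            norm ((\<Sum>a\<in>S n. z ^ nat a)
                  - complex_of_real (real (card (S n)) / real n) * (\<Sum>k=1..n. z ^ k))) \<le> c * norm (real n)"
        unfolding E_def by simp
    qed
  qed
qed

end
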